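(* For every ordered forest $\mathcal F$ let $S^{\mathcal F}(A)\in\mathbb K\langle\langle A\rangle\rangle$ be the sum of all $\mathcal F$-compatible words over $A$. Then: (i) the series $S^{\mathcal F}(A)$, $\mathcal F$ ranging over all ordered forests, are linearly independent; (ii) for all ordered forests $\mathcal F,\mathcal G$, $S^{\mathcal F}(A)S^{\mathcal G}(A)=S^{\mathcal F\mathcal G}(A)$; (iii) for every ordered forest $\mathcal F$, letting letters of $A$ commute with letters of $B$, $$S^{\mathcal F}(A\oplus B)=\sum_{V}S^{\mathrm{Roo}_V\mathcal F}(A)\,S^{\mathrm{Lea}_V\mathcal F}(B),$$ the sum over admissible cuts $V$ of $\mathcal F$. Consequently $\mathcal F\mapsto S^{\mathcal F}(A)$ is an isomorphism of $\mathbf H_o$ onto the span of the $S^{\mathcal F}$, where the coproduct $\Delta$ of $\mathbf H_o$ corresponds to $P(A)\mapsto P(A\oplus B)$ under the identification $P(A)Q(B)\leftrightarrow P\otimes Q$.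
   Context: Let $\mathbb K$ be a field of characteristic $0$. An ordered forest on $n$ vertices ($n\ge 0$) is a rooted forest whose vertex set is $[n]=\{1,\dots,n\}$ with its natural total order (the labels need not be related to the tree structure); it is determined by its set of roots and the parent map $p$ on non-root vertices. A vertex $w$ is a descendant of $v$ if $v$ is obtained from $w$ by applying $p$ at least once. For $I\subseteq[n]$ with $|I|=k$, the restriction $\mathcal F_{|I}$ is the ordered forest on $[k]$ obtained by keeping the vertices in $I$ and the edges of $\mathcal F$ between two vertices of $I$ (a vertex of $I$ whose parent is not in $I$ becomes a root), relabelled via the unique increasing bijection $I\to[k]$. An admissible cut of $\mathcal F$ is a subset $V\subseteq[n]$ (possibly empty) containing no two distinct vertices one of which is a descendant of the other. For such $V$, let $L_V$ be the set of vertices lying in $V$ or descending from an element of $V$, and set $\mathrm{Lea}_V\mathcal F=\mathcal F_{|L_V}$, $\mathrm{Roo}_V\mathcal F=\mathcal F_{|[n]\setminus L_V}$. For ordered forests $\mathcal F$ on $[n]$ and $\mathcal G$ on $[m]$, $\mathcal F\mathcal G$ is the ordered forest on $[n+m]$ which is the disjoint union of $\mathcal F$ and of $\mathcal G$ with labels shifted by $n$. $\mathbf H_o$ is the $\mathbb K$-vector space with basis the ordered forests, with product extending $(\mathcal F,\mathcal G)\mapsto\mathcal F\mathcal G$ and coproduct $\Delta(\mathcal F)=\sum_{V}\mathrm{Roo}_V\mathcal F\otimes\mathrm{Lea}_V\mathcal F$ over admissible cuts $V$. First realization: $A=\{a_{ij}: i,j\in\mathbb Z,\ 0\le i<j\}$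 with the relation $a_{ij}\prec a_{kl}$ iff $j=k$. A word $w=w_1\cdots w_n$ over $A$ is $\mathcal F$-compatible ($\mathcal F$ on $[n]$) if $w_k\prec w_l$ whenever $k$ is the parent of $l$ in $\mathcal F$ (no condition on roots). If $B=\{b_{ij}:0\le i<j\}$ is a disjoint copy of $A$ with the same relation, $A\oplus B$ is the disjoint union with $\prec$ restricting to the given relations on $A$ and on $B$, and additionally $a\prec b$ for all $a\in A$, $b\in B$ (and never $b\prec a$). $S^{\mathcal F}(A\oplus B)$ is the sum of all $\mathcal F$-compatible words over $A\oplus B$. *)

theory Defs
  imports Main
begin

text \<open>An ordered forest on [n] is a pair (n, p) where p v = Some u means u is the
parent of v, and p v = None means v is a root (or v is not a vertex).\<close>

type_synonym oforest = "nat \<times> (nat \<Rightarrow> nat option)"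

definition of_edges :: "oforest \<Rightarrow> (nat \<times> nat) set" where
  "of_edges F = {(u, v). snd F v = Some u}"

definition oforests :: "oforest set" where
  "oforests = {(n, p). (\<forall>v. p v \<noteq> None \<longrightarrow> v \<in> {1..n})
                     \<and> (\<forall>v u. p v = Some u \<longrightarrow> u \<in> {1..n})
                     \<and> (\<forall>v. (v, v) \<notin> (of_edges (n, p))\<^sup>+)}"

definition is_desc :: "oforest \<Rightarrow> nat \<Rightarrow> nat \<Rightarrow> bool" where
  "is_desc F w v \<longleftrightarrow> (v, w) \<in> (of_edges F)\<^sup>+"

definition admissible_cut :: "oforest \<Rightarrow> nat set \<Rightarrow> bool" where
  "admissible_cut F V \<longleftrightarrow> V \<subseteq> {1..fst F} \<and>
     (\<forall>v\<in>V. \<forall>w\<in>V. v \<noteq> w \<longrightarrow> \<not> is_desc F w v)"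

definition cut_L :: "oforest \<Rightarrow> nat set \<Rightarrow> nat set" where
  "cut_L F V = {w \<in> {1..fst F}. w \<in> V \<or> (\<exists>v\<in>V. is_desc F w v)}"

text \<open>Restriction to I \<subseteq> [n], relabelled by the increasing bijection I \<rightarrow> [card I].\<close>
definition of_restrict :: "oforest \<Rightarrow> nat set \<Rightarrow> oforest" where
  "of_restrict F I = (card I, (\<lambda>i. if i \<in> {1..card I} then
      (case snd F (sorted_list_of_set I ! (i - 1)) of
         None \<Rightarrow> None
       | Some u \<Rightarrow> if u \<in> I then Some (card {x \<in> I. x \<le> u}) else None)
      else None))"

definition Lea :: "oforest \<Rightarrow> nat set \<Rightarrow> oforest" where
  "Lea F V = of_restrict F (cut_L F V)"

definition Roo :: "oforest \<Rightarrow> nat set \<Rightarrow> oforest" where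
  "Roo F V = of_restrict F ({1..fst F} - cut_L F V)"

definition of_prod :: "oforest \<Rightarrow> oforest \<Rightarrow> oforest" where
  "of_prod F G = (fst F + fst G, (\<lambda>v. if v \<le> fst F then snd F v
                     else map_option (\<lambda>u. u + fst F) (snd G (v - fst F))))"

text \<open>Noncommutative formal power series over letters of type 'a: functions from words to 'k.\<close>

definition compatible :: "('a \<Rightarrow> 'a \<Rightarrow> bool) \<Rightarrow> oforest \<Rightarrow> 'a list \<Rightarrow> bool" where
  "compatible prec F w \<longleftrightarrow> length w = fst F \<and>
     (\<forall>k l. snd F l = Some k \<longrightarrow> prec (w ! (k - 1)) (w ! (l - 1)))"

definition SF :: "'a set \<Rightarrow> ('a \<Rightarrow> 'a \<Rightarrow> bool) \<Rightarrow> oforest \<Rightarrow> 'a list \<Rightarrow> 'k::field_char_0" where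
  "SF Alph prec F w = (if w \<in> lists Alph \<and> compatible prec F w then 1 else 0)"

definition ser_mult :: "('a list \<Rightarrow> 'k::field_char_0) \<Rightarrow> ('a list \<Rightarrow> 'k) \<Rightarrow> 'a list \<Rightarrow> 'k" where
  "ser_mult S T w = (\<Sum>i\<le>length w. S (take i w) * T (drop i w))"

text \<open>The alphabet A = {a_ij : 0 \<le> i < j}, a_ij \<prec> a_kl iff j = k.\<close>
definition alphA :: "(int \<times> int) set" where
  "alphA = {(i, j). 0 \<le> i \<and> i < j}"

definition precA :: "int \<times> int \<Rightarrow> int \<times> int \<Rightarrow> bool" where
  "precA a b \<longleftrightarrow> snd a = fst b"

text \<open>A \<oplus> B: letters Inl a (from A), Inr b (from the copy B).\<close>
definition alphAB :: "((int \<times> int) + (int \<times> int)) set" where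
  "alphAB = Inl ` alphA \<union> Inr ` alphA"

fun precAB :: "(int \<times> int) + (int \<times> int) \<Rightarrow> (int \<times> int) + (int \<times> int) \<Rightarrow> bool" where
  "precAB (Inl a) (Inl a') = precA a a'"
| "precAB (Inr b) (Inr b') = precA b b'"
| "precAB (Inl a) (Inr b) = True"
| "precAB (Inr b) (Inl a) = False"

end

theory Submission
  imports Defs
begin

lemma oforestsD:
  assumes "F \<in> oforests"
  shows "snd F v \<noteq> None \<Longrightarrow> v \<in> {1..fst F}"
    and "snd F v = Some u \<Longrightarrow> u \<in> {1..fst F}"
    and "(x, x) \<notin> (of_edges F)\<^sup>+"
  using assms unfolding oforests_def by (cases F; auto)+

lemma of_edges_iff[simp]: "(u, v) \<in> of_edges F \<longleftrightarrow> snd F v = Some u"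
  by (simp add: of_edges_def)

lemma oforests_edge:
  assumes "F \<in> oforests" "snd F v = Some u"
  shows "v \<in> {1..fst F}" "u \<in> {1..fst F}"
  using oforestsD[OF assms(1)] assms(2) by auto

lemma trancl_in:
  assumes "F \<in> oforests" "(u, v) \<in> (of_edges F)\<^sup>+"
  shows "u \<in> {1..fst F} \<and> v \<in> {1..fst F}"
  using assms(2)
  by (induct rule: trancl_induct) (auto dest: oforests_edge[OF assms(1)])

definition anc :: "oforest \<Rightarrow> nat \<Rightarrow> nat set" where
  "anc F v = {u. (u, v) \<in> (of_edges F)\<^sup>+}"

definition ht :: "oforest \<Rightarrow> nat \<Rightarrow> nat" where
  "ht F v = card (anc F v)"

lemma ht_less:
  assumes F: "F \<in> oforests" and e: "snd F v = Some u"
  shows "ht F u < ht F v"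
proof -
  have fin: "finite (anc F v)"
    by (rule finite_subset[of _ "{1..fst F}"]) (auto simp: anc_def dest: trancl_in[OF F])
  have "anc F u \<subset> anc F v"
  proof
    show "anc F u \<subseteq> anc F v" using e
      by (auto simp: anc_def intro: trancl_into_trancl)
    have "u \<in> anc F v" using e by (auto simp: anc_def intro: r_into_trancl)
    moreover have "u \<notin> anc F u" using oforestsD(3)[OF F] by (simp add: anc_def)
    ultimately show "anc F u \<noteq> anc F v" by blast
  qed
  then show ?thesis unfolding ht_def using fin by (rule psubset_card_mono[rotated])
qed

section \<open>Part (ii)\<close>

lemma SF_eq: "SF Alph prec F w = (if w \<in> lists Alph \<and> compatible prec F w then 1 else 0)"
  by (simp add: SF_def)

lemma part2:
  assumes F: "F \<in> oforests" and G: "G \<in> oforests"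
  shows "ser_mult (SF alphA precA F) (SF alphA precA G) w
          = (SF alphA precA (of_prod F G) w :: 'k::field_char_0)"
proof -
  let ?n = "fst F" and ?m = "fst G"
  have key: "(take ?n w \<in> lists alphA \<and> compatible precA F (take ?n w)) \<and>
             (drop ?n w \<in> lists alphA \<and> compatible precA G (drop ?n w))
         \<longleftrightarrow> w \<in> lists alphA \<and> compatible precA (of_prod F G) w"
    if len: "?n \<le> length w"
  proof -
    have lists: "w \<in> lists alphA \<longleftrightarrow> take ?n w \<in> lists alphA \<and> drop ?n w \<in> lists alphA"
      using append_in_lists_conv[of "take ?n w" "drop ?n w" alphA] by simp
    have comp: "compatible precA F (take ?n w) \<and> compatible precA G (drop ?n w)
       \<longleftrightarrow> compatible precA (of_prod F G) w"
    proof
      assume A: "compatible precA F (take ?n w) \<and> compatible precA G (drop ?n w)"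
      have lw: "length w = ?n + ?m" using A len by (auto simp: compatible_def)
      show "compatible precA (of_prod F G) w"
        unfolding compatible_def
      proof (intro conjI allI impI)
        show "length w = fst (of_prod F G)" using lw by (simp add: of_prod_def)
        fix k l assume e: "snd (of_prod F G) l = Some k"
        show "precA (w ! (k - 1)) (w ! (l - 1))"
        proof (cases "l \<le> ?n")
          case True
          then have e': "snd F l = Some k" using e by (simp add: of_prod_def)
          from oforests_edge[OF F e'] have kl: "k \<le> ?n" "l \<le> ?n" "k \<ge> 1" "l \<ge> 1" by auto
          have "precA (take ?n w ! (k - 1)) (take ?n w ! (l - 1))"
            using A e' unfolding compatible_def by blast
          then show ?thesis using kl by simp
        next
          case False
          then obtain k' where e': "snd G (l - ?n) = Some k'" and kk: "k = k' + ?n"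
            using e by (auto simp: of_prod_def)
          from oforests_edge[OF G e'] False have "k' \<ge> 1" "l - ?n \<ge> 1" by auto
          have "precA (drop ?n w ! (k' - 1)) (drop ?n w ! (l - ?n - 1))"
            using A e' unfolding compatible_def by blast
          moreover have "?n + (k' - 1) = k - 1" "?n + (l - ?n - 1) = l - 1"
            using kk False \<open>k' \<ge> 1\<close> \<open>l - ?n \<ge> 1\<close> by auto
          ultimately show ?thesis using len by simp
        qed
      qed
    next
      assume A: "compatible precA (of_prod F G) w"
      have lw: "length w = ?n + ?m" using A by (auto simp: compatible_def of_prod_def)
      show "compatible precA F (take ?n w) \<and> compatible precA G (drop ?n w)"
        unfolding compatible_def
      proof (intro conjI allI impI)
        show "length (take ?n w) = ?n" using len by simp
        show "length (drop ?n w) = ?m" using lw by simp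
      next
        fix k l assume e: "snd F l = Some k"
        from oforests_edge[OF F e] have kl: "k \<le> ?n" "l \<le> ?n" "k \<ge> 1" "l \<ge> 1" by auto
        then have "snd (of_prod F G) l = Some k" using e by (simp add: of_prod_def)
        with A have "precA (w ! (k - 1)) (w ! (l - 1))" by (auto simp: compatible_def)
        with kl show "precA (take ?n w ! (k - 1)) (take ?n w ! (l - 1))" by simp
      next
        fix k l assume e: "snd G l = Some k"
        from oforests_edge[OF G e] have kl: "k \<ge> 1" "l \<ge> 1" by auto
        then have "snd (of_prod F G) (l + ?n) = Some (k + ?n)" using e by (simp add: of_prod_def)
        with A have "precA (w ! (k + ?n - 1)) (w ! (l + ?n - 1))" by (auto simp: compatible_def)
        moreover have "k + ?n - 1 = ?n + (k - 1)" "l + ?n - 1 = ?n + (l - 1)" using kl by auto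
        ultimately show "precA (drop ?n w ! (k - 1)) (drop ?n w ! (l - 1))"
          using len by simp
      qed
    qed
    show ?thesis using lists comp by blast
  qed
  show ?thesis
  proof (cases "?n \<le> length w")
    case True
    have "ser_mult (SF alphA precA F) (SF alphA precA G) w
        = (\<Sum>i\<in>{..length w}. (SF alphA precA F (take i w) * SF alphA precA G (drop i w) :: 'k))"
      by (simp add: ser_mult_def)
    also have "\<dots> = SF alphA precA F (take ?n w) * SF alphA precA G (drop ?n w)
       + (\<Sum>i\<in>{..length w} - {?n}. (SF alphA precA F (take i w) * SF alphA precA G (drop i w) :: 'k))"
      using True by (subst sum.remove[of _ ?n]) auto
    also have "(\<Sum>i\<in>{..length w} - {?n}. (SF alphA precA F (take i w) * SF alphA precA G (drop i w) :: 'k)) = 0"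
      by (rule sum.neutral) (auto simp: SF_def compatible_def)
    finally have X: "ser_mult (SF alphA precA F) (SF alphA precA G) w
       = SF alphA precA F (take ?n w) * SF alphA precA G (drop ?n w) + (0::'k)" .
    have Y: "SF alphA precA F (take ?n w) * SF alphA precA G (drop ?n w)
       = (SF alphA precA (of_prod F G) w :: 'k)"
      using key[OF True] unfolding SF_def
      by (cases "w \<in> lists alphA \<and> compatible precA (of_prod F G) w") auto
    show ?thesis using X Y by simp
  next
    case False
    have "ser_mult (SF alphA precA F) (SF alphA precA G) w = (0::'k)"
      unfolding ser_mult_def
      by (rule sum.neutral) (use False in \<open>auto simp: SF_def compatible_def\<close>)
    moreover have "SF alphA precA (of_prod F G) w = (0::'k)"
      using False by (auto simp: SF_def compatible_def of_prod_def)
    ultimately show ?thesis by simp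
  qed
qed

section \<open>Part (i)\<close>

definition Jn :: "oforest \<Rightarrow> nat \<Rightarrow> nat" where
  "Jn F v = (fst F + 1) * ht F v + v"

definition J :: "oforest \<Rightarrow> nat \<Rightarrow> int" where
  "J F v = int (Jn F v)"

definition wF :: "oforest \<Rightarrow> (int \<times> int) list" where
  "wF F = map (\<lambda>v. (case snd F v of None \<Rightarrow> 0 | Some u \<Rightarrow> J F u, J F v)) [1..<fst F + 1]"

lemma wF_nth: "v \<in> {1..fst F} \<Longrightarrow>
   wF F ! (v - 1) = (case snd F v of None \<Rightarrow> 0 | Some u \<Rightarrow> J F u, J F v)"
proof -
  assume v: "v \<in> {1..fst F}"
  then have "v - 1 < length [1..<fst F + 1]" by auto
  then have "wF F ! (v - 1) = (\<lambda>v. (case snd F v of None \<Rightarrow> 0 | Some u \<Rightarrow> J F u, J F v)) ([1..<fst F + 1] ! (v - 1))"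
    unfolding wF_def by (rule nth_map)
  moreover have "[1..<fst F + 1] ! (v - 1) = v" using v by (subst nth_upt) auto
  ultimately show ?thesis by simp
qed

lemma length_wF[simp]: "length (wF F) = fst F" by (simp add: wF_def)

lemma J_inj:
  assumes "a \<in> {1..fst F}" "b \<in> {1..fst F}" "J F a = J F b"
  shows "a = b"
proof -
  let ?m = "fst F + 1"
  have "Jn F a = Jn F b" using assms(3) by (simp add: J_def)
  then have "?m * ht F a + a = ?m * ht F b + b" by (simp only: Jn_def)
  then have "(?m * ht F a + a) mod ?m = (?m * ht F b + b) mod ?m" by simp
  moreover have "(?m * ht F a + a) mod ?m = a"
    using mod_mult_self4[of ?m "ht F a" a] assms(1) by (simp only:) simp
  moreover have "(?m * ht F b + b) mod ?m = b"
    using mod_mult_self4[of ?m "ht F b" b] assms(2) by (simp only:) simp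
  ultimately show ?thesis by simp
qed

lemma J_pos: "v \<ge> 1 \<Longrightarrow> J F v \<ge> 1"
proof -
  assume "v \<ge> 1"
  then have "Jn F v \<ge> 1" by (simp add: Jn_def)
  then show ?thesis by (simp add: J_def)
qed

lemma J_less:
  assumes F: "F \<in> oforests" and e: "snd F v = Some u"
  shows "J F u < J F v"
proof -
  let ?m = "fst F + 1"
  have h: "ht F u + 1 \<le> ht F v" using ht_less[OF F e] by simp
  have "u \<le> fst F" using oforests_edge[OF F e] by auto
  then have "?m * ht F u + u < ?m * (ht F u + 1)" by simp
  also have "\<dots> \<le> ?m * ht F v" using h by (rule mult_le_mono2)
  also have "\<dots> \<le> ?m * ht F v + v" by simp
  finally have "Jn F u < Jn F v" by (simp only: Jn_def)
  then show ?thesis by (simp add: J_def)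
qed

lemma wF_SF:
  assumes F: "F \<in> oforests"
  shows "(SF alphA precA F (wF F) :: 'k::field_char_0) = 1"
proof -
  have "\<forall>x\<in>set (wF F). x \<in> alphA"
  proof
    fix x assume "x \<in> set (wF F)"
    then obtain i where i: "i < fst F" "x = wF F ! i" by (auto simp: in_set_conv_nth)
    then have v: "Suc i \<in> {1..fst F}" by auto
    have x: "x = (case snd F (Suc i) of None \<Rightarrow> 0 | Some u \<Rightarrow> J F u, J F (Suc i))"
      using wF_nth[OF v] i by simp
    show "x \<in> alphA"
    proof (cases "snd F (Suc i)")
      case None then show ?thesis using x J_pos[of "Suc i" F] by (simp add: alphA_def)
    next
      case (Some u)
      then show ?thesis using x J_less[OF F Some] J_pos[of u F] oforests_edge[OF F Some]
        by (simp add: alphA_def)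
    qed
  qed
  then have "wF F \<in> lists alphA" by auto
  moreover have "compatible precA F (wF F)"
    unfolding compatible_def
  proof (intro conjI allI impI)
    show "length (wF F) = fst F" by simp
    fix k l assume e: "snd F l = Some k"
    from oforests_edge[OF F e] have "k \<in> {1..fst F}" "l \<in> {1..fst F}" by auto
    then show "precA (wF F ! (k - 1)) (wF F ! (l - 1))"
      using e wF_nth[of k F] wF_nth[of l F] by (simp add: precA_def)
  qed
  ultimately show ?thesis by (simp add: SF_def)
qed

lemma wF_sub:
  assumes F: "F \<in> oforests" and G: "G \<in> oforests" and c: "compatible precA G (wF F)"
  shows "fst G = fst F" "snd G l = Some k \<Longrightarrow> snd F l = Some k"
proof -
  show fG: "fst G = fst F" using c by (simp add: compatible_def)
  assume e: "snd G l = Some k"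
  from oforests_edge[OF G e] fG have kl: "k \<in> {1..fst F}" "l \<in> {1..fst F}" by auto
  from c e have "precA (wF F ! (k - 1)) (wF F ! (l - 1))" by (simp add: compatible_def)
  then have eq: "J F k = (case snd F l of None \<Rightarrow> 0 | Some u \<Rightarrow> J F u)"
    using wF_nth[OF kl(1)] wF_nth[OF kl(2)] by (simp add: precA_def)
  show "snd F l = Some k"
  proof (cases "snd F l")
    case None then show ?thesis using eq J_pos[of k F] kl by simp
  next
    case (Some u)
    then have "J F k = J F u" using eq by simp
    moreover have "u \<in> {1..fst F}" using oforests_edge[OF F Some] by auto
    ultimately show ?thesis using J_inj[of k F u] kl Some by simp
  qed
qed

definition ecount :: "oforest \<Rightarrow> nat" where
  "ecount F = card {v \<in> {1..fst F}. snd F v \<noteq> None}"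

lemma ecount_less:
  assumes F: "F \<in> oforests" and G: "G \<in> oforests" and ne: "G \<noteq> F"
    and fG: "fst G = fst F" and sub: "\<And>l k. snd G l = Some k \<Longrightarrow> snd F l = Some k"
  shows "ecount G < ecount F"
proof -
  have "snd G \<noteq> snd F" using ne fG by (cases F, cases G) auto
  then obtain l where l: "snd G l \<noteq> snd F l" by auto
  have "snd G l = None"
  proof (rule ccontr)
    assume "snd G l \<noteq> None"
    then obtain k where "snd G l = Some k" by auto
    then show False using sub l by simp
  qed
  with l have lF: "snd F l \<noteq> None" by simp
  then have lin: "l \<in> {1..fst F}" using oforestsD(1)[OF F] by blast
  have "{v \<in> {1..fst G}. snd G v \<noteq> None} \<subset> {v \<in> {1..fst F}. snd F v \<noteq> None}"
  proof
    show "{v \<in> {1..fst G}. snd G v \<noteq> None} \<subseteq> {v \<in> {1..fst F}. snd F v \<noteq> None}"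
      using sub fG by fastforce
    show "{v \<in> {1..fst G}. snd G v \<noteq> None} \<noteq> {v \<in> {1..fst F}. snd F v \<noteq> None}"
      using lin lF \<open>snd G l = None\<close> by blast
  qed
  then show ?thesis unfolding ecount_def by (rule psubset_card_mono[rotated]) simp
qed

lemma part1:
  fixes c :: "oforest \<Rightarrow> 'k::field_char_0"
  assumes fin: "finite X" and Xo: "X \<subseteq> oforests"
    and z: "\<forall>w. (\<Sum>F\<in>X. c F * SF alphA precA F w) = 0"
  shows "\<forall>F\<in>X. c F = 0"
proof -
  have "\<forall>F\<in>X. ecount F = k \<longrightarrow> c F = 0" for k
  proof (induction k rule: less_induct)
    case (less k)
    show ?case
    proof (intro ballI impI)
      fix F assume FX: "F \<in> X" and Fk: "ecount F = k"
      have Fo: "F \<in> oforests" using FX Xo by auto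
      have "0 = (\<Sum>G\<in>X. c G * SF alphA precA G (wF F))" using z by simp
      also have "\<dots> = c F * SF alphA precA F (wF F) + (\<Sum>G\<in>X-{F}. c G * SF alphA precA G (wF F))"
        using sum.remove[OF fin FX] by simp
      also have "(\<Sum>G\<in>X-{F}. c G * SF alphA precA G (wF F)) = 0"
      proof (rule sum.neutral, rule ballI)
        fix G assume GX: "G \<in> X - {F}"
        have Go: "G \<in> oforests" using GX Xo by auto
        show "c G * SF alphA precA G (wF F) = 0"
        proof (cases "compatible precA G (wF F)")
          case True
          have "ecount G < ecount F"
            using ecount_less[OF Fo Go _ wF_sub(1)[OF Fo Go True] wF_sub(2)[OF Fo Go True]] GX
            by auto
          then have "c G = 0" using less GX Fk by auto
          then show ?thesis by simp
        next
          case False then show ?thesis by (simp add: SF_def)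
        qed
      qed
      finally show "c F = 0" using wF_SF[OF Fo, where 'k='k] by simp
    qed
  qed
  then show ?thesis by blast
qed

section \<open>Cuts\<close>

lemma desc_child:
  assumes "is_desc F k v" "snd F l = Some k" shows "is_desc F l v"
  using assms by (auto simp: is_desc_def intro: trancl_into_trancl)

lemma cut_L_closed:
  assumes F: "F \<in> oforests" and e: "snd F l = Some k" and k: "k \<in> cut_L F V"
  shows "l \<in> cut_L F V"
proof -
  have l: "l \<in> {1..fst F}" using oforests_edge[OF F e] by auto
  from k have "k \<in> V \<or> (\<exists>v\<in>V. is_desc F k v)" by (simp add: cut_L_def)
  then have "\<exists>v\<in>V. is_desc F l v"
  proof
    assume kV: "k \<in> V"
    have "is_desc F l k" using e by (simp add: is_desc_def r_into_trancl')
    then show ?thesis using kV by blast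
  next
    assume "\<exists>v\<in>V. is_desc F k v" then show ?thesis using desc_child[OF _ e] by blast
  qed
  then show ?thesis using l by (simp add: cut_L_def)
qed

lemma cut_unique_sub:
  assumes F: "F \<in> oforests" and A1: "admissible_cut F V1" and A2: "admissible_cut F V2"
    and eq: "cut_L F V1 = cut_L F V2"
  shows "V1 \<subseteq> V2"
proof
  fix x assume x: "x \<in> V1"
  have acy: "\<And>y. \<not> is_desc F y y" using oforestsD(3)[OF F] by (simp add: is_desc_def)
  have "x \<in> cut_L F V1" using x A1 by (auto simp: cut_L_def admissible_cut_def)
  then have "x \<in> cut_L F V2" using eq by simp
  then have "x \<in> V2 \<or> (\<exists>v\<in>V2. is_desc F x v)" by (simp add: cut_L_def)
  then show "x \<in> V2"
  proof
    assume "\<exists>v\<in>V2. is_desc F x v"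
    then obtain v where v: "v \<in> V2" "is_desc F x v" by blast
    have "v \<in> cut_L F V2" using v A2 by (auto simp: cut_L_def admissible_cut_def)
    then have "v \<in> cut_L F V1" using eq by simp
    then have "v \<in> V1 \<or> (\<exists>v'\<in>V1. is_desc F v v')" by (simp add: cut_L_def)
    then show ?thesis
    proof
      assume "v \<in> V1"
      moreover have "x \<noteq> v" using v acy by blast
      ultimately show ?thesis using A1 x v by (auto simp: admissible_cut_def)
    next
      assume "\<exists>v'\<in>V1. is_desc F v v'"
      then obtain v' where v': "v' \<in> V1" "is_desc F v v'" by blast
      have xv': "is_desc F x v'" using v v' by (auto simp: is_desc_def)
      show ?thesis
      proof (cases "x = v'")
        case True
        then have "is_desc F x x" using v v' by (auto simp: is_desc_def)
        then show ?thesis using acy by blast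
      next
        case False
        then show ?thesis using A1 x v' xv' by (auto simp: admissible_cut_def)
      qed
    qed
  qed
qed

lemma cut_unique:
  assumes "F \<in> oforests" "admissible_cut F V1" "admissible_cut F V2" "cut_L F V1 = cut_L F V2"
  shows "V1 = V2"
  using cut_unique_sub[OF assms] cut_unique_sub[OF assms(1,3,2) assms(4)[symmetric]] by blast

lemma closed_desc:
  assumes cl: "\<And>l k. snd F l = Some k \<Longrightarrow> k \<in> L \<Longrightarrow> l \<in> L"
    and d: "(v, c) \<in> (of_edges F)\<^sup>+" and v: "v \<in> L"
  shows "c \<in> L"
  using d v by (induct rule: trancl_induct) (auto intro: cl)

lemma cut_exists:
  assumes F: "F \<in> oforests" and Lsub: "L \<subseteq> {1..fst F}"
    and cl: "\<And>l k. snd F l = Some k \<Longrightarrow> k \<in> L \<Longrightarrow> l \<in> L"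
  shows "\<exists>V. admissible_cut F V \<and> cut_L F V = L"
proof -
  define V where "V = {x \<in> L. \<forall>y. snd F x = Some y \<longrightarrow> y \<notin> L}"
  have adm: "admissible_cut F V"
    unfolding admissible_cut_def
  proof (intro conjI ballI impI)
    show "V \<subseteq> {1..fst F}" using Lsub by (auto simp: V_def)
    fix v w assume vw: "v \<in> V" "w \<in> V" "v \<noteq> w"
    show "\<not> is_desc F w v"
    proof
      assume "is_desc F w v"
      then have "(v, w) \<in> (of_edges F)\<^sup>+" by (simp add: is_desc_def)
      then show False
      proof (cases rule: tranclE)
        case base then show False using vw by (auto simp: V_def)
      next
        case (step c)
        then have "c \<in> L" using closed_desc[of F L, OF cl] vw by (auto simp: V_def)
        then show False using step vw by (auto simp: V_def)
      qed
    qed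
  qed
  have "cut_L F V = L"
  proof
    show "cut_L F V \<subseteq> L"
    proof
      fix w assume "w \<in> cut_L F V"
      then have "w \<in> V \<or> (\<exists>v\<in>V. is_desc F w v)" by (simp add: cut_L_def)
      then show "w \<in> L"
        using closed_desc[of F L, OF cl] by (auto simp: V_def is_desc_def)
    qed
    have "\<forall>x. ht F x = h \<longrightarrow> x \<in> L \<longrightarrow> x \<in> V \<or> (\<exists>v\<in>V. is_desc F x v)" for h
    proof (induction h rule: less_induct)
      case (less h)
      show ?case
      proof (intro allI impI)
        fix x assume xh: "ht F x = h" and xL: "x \<in> L"
        show "x \<in> V \<or> (\<exists>v\<in>V. is_desc F x v)"
        proof (cases "x \<in> V")
          case False
          then obtain y where y: "snd F x = Some y" "y \<in> L" using xL by (auto simp: V_def)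
          have "ht F y < h" using ht_less[OF F y(1)] xh by simp
          then have "y \<in> V \<or> (\<exists>v\<in>V. is_desc F y v)" using less y by blast
          then show ?thesis
          proof
            assume yV: "y \<in> V"
            have "is_desc F x y" using y by (simp add: is_desc_def r_into_trancl')
            then show ?thesis using yV by blast
          next
            assume "\<exists>v\<in>V. is_desc F y v" then show ?thesis using desc_child[OF _ y(1)] by blast
          qed
        qed simp
      qed
    qed
    then show "L \<subseteq> cut_L F V" using Lsub by (auto simp: cut_L_def)
  qed
  with adm show ?thesis by blast
qed

definition rk :: "nat set \<Rightarrow> nat \<Rightarrow> nat" where
  "rk I x = card {y \<in> I. y \<le> x}"

lemma rk_nth:
  assumes fin: "finite I" and j: "j < card I"
  shows "rk I (sorted_list_of_set I ! j) = Suc j"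
proof -
  let ?s = "sorted_list_of_set I"
  have ls: "length ?s = card I" by simp
  have ss: "sorted_wrt (<) ?s" by (rule strict_sorted_list_of_set)
  have set: "set ?s = I" using fin by simp
  have dist: "distinct ?s" by simp
  have "{y \<in> I. y \<le> ?s ! j} = (\<lambda>t. ?s ! t) ` {..j}"
  proof
    show "{y \<in> I. y \<le> ?s ! j} \<subseteq> (\<lambda>t. ?s ! t) ` {..j}"
    proof
      fix y assume y: "y \<in> {y \<in> I. y \<le> ?s ! j}"
      then have "y \<in> set ?s" using set by simp
      then obtain t where t: "t < length ?s" "y = ?s ! t" by (metis in_set_conv_nth)
      have "t \<le> j"
      proof (rule ccontr)
        assume "\<not> t \<le> j"
        then have "?s ! j < ?s ! t" using sorted_wrt_nth_less[OF ss, of j t] t by simp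
        then show False using y t by simp
      qed
      then show "y \<in> (\<lambda>t. ?s ! t) ` {..j}" using t by auto
    qed
    show "(\<lambda>t. ?s ! t) ` {..j} \<subseteq> {y \<in> I. y \<le> ?s ! j}"
    proof
      fix y assume "y \<in> (\<lambda>t. ?s ! t) ` {..j}"
      then obtain t where t: "t \<le> j" "y = ?s ! t" by auto
      have "y \<in> I" using t j ls set by (metis le_less_trans nth_mem)
      moreover have "y \<le> ?s ! j"
        using t sorted_wrt_nth_less[OF ss, of t j] j ls by (cases "t = j") auto
      ultimately show "y \<in> {y \<in> I. y \<le> ?s ! j}" by simp
    qed
  qed
  moreover have "inj_on (\<lambda>t. ?s ! t) {..j}"
    using dist j ls by (auto simp: inj_on_def nth_eq_iff_index_eq)
  ultimately show ?thesis unfolding rk_def by (simp add: card_image)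
qed

lemma restrict_compat:
  assumes fin: "finite I"
  shows "compatible prec (of_restrict F I) s \<longleftrightarrow> length s = card I \<and>
    (\<forall>l\<in>I. \<forall>k\<in>I. snd F l = Some k \<longrightarrow> prec (s ! (rk I k - 1)) (s ! (rk I l - 1)))"
proof -
  let ?s = "sorted_list_of_set I"
  have ls: "length ?s = card I" by simp
  have set: "set ?s = I" using fin by simp
  have snd_r: "snd (of_restrict F I) i = (if i \<in> {1..card I} then
      (case snd F (?s ! (i - 1)) of None \<Rightarrow> None
       | Some u \<Rightarrow> if u \<in> I then Some (rk I u) else None) else None)" for i
    unfolding of_restrict_def rk_def by simp
  show ?thesis
  proof
    assume c: "compatible prec (of_restrict F I) s"
    then have len: "length s = card I" by (simp add: compatible_def of_restrict_def)
    have "prec (s ! (rk I k - 1)) (s ! (rk I l - 1))"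
      if l: "l \<in> I" and k: "k \<in> I" and e: "snd F l = Some k" for l k
    proof -
      have "l \<in> set ?s" using l set by simp
      then obtain j where j: "j < length ?s" "?s ! j = l" by (metis in_set_conv_nth)
      have "snd (of_restrict F I) (Suc j) = Some (rk I k)"
        using j e k ls by (subst snd_r) auto
      then have "prec (s ! (rk I k - 1)) (s ! (Suc j - 1))" using c unfolding compatible_def by blast
      moreover have "rk I l = Suc j" using rk_nth[OF fin, of j] j ls by simp
      ultimately show ?thesis by simp
    qed
    with len show "length s = card I \<and>
      (\<forall>l\<in>I. \<forall>k\<in>I. snd F l = Some k \<longrightarrow> prec (s ! (rk I k - 1)) (s ! (rk I l - 1)))" by blast
  next
    assume A: "length s = card I \<and>
      (\<forall>l\<in>I. \<forall>k\<in>I. snd F l = Some k \<longrightarrow> prec (s ! (rk I k - 1)) (s ! (rk I l - 1)))"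
    show "compatible prec (of_restrict F I) s"
      unfolding compatible_def
    proof (intro conjI allI impI)
      show "length s = fst (of_restrict F I)" using A by (simp add: of_restrict_def)
      fix k' i assume e: "snd (of_restrict F I) i = Some k'"
      then have i: "i \<in> {1..card I}" by (simp add: snd_r split: if_splits)
      then obtain u where u: "snd F (?s ! (i - 1)) = Some u" "u \<in> I" "k' = rk I u"
        using e by (auto simp: snd_r split: option.splits if_splits)
      have lI: "?s ! (i - 1) \<in> I" using i ls set by (metis atLeastAtMost_iff diff_less less_le_trans nth_mem zero_less_one)
      have i1: "i - 1 < card I" using i by auto
      have "rk I (?s ! (i - 1)) = i" using rk_nth[OF fin i1] i by simp
      then show "prec (s ! (k' - 1)) (s ! (i - 1))" using A lI u by metis
    qed
  qed
qed

lemma filter_nth_take: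
  assumes i: "i < length w" and P: "P (w ! i)"
  shows "length (filter P (take i w)) < length (filter P w) \<and>
         filter P w ! length (filter P (take i w)) = w ! i"
proof -
  have "filter P w = filter P (take i w @ w ! i # drop (Suc i) w)"
    using arg_cong[of _ _ "filter P", OF id_take_nth_drop[OF i]] .
  then have "filter P w = filter P (take i w) @ w ! i # filter P (drop (Suc i) w)" using P by simp
  then show ?thesis by (simp add: nth_append)
qed

lemma card_pos_set:
  "card {y \<in> {1..length w}. P (w ! (y - 1))} = length (filter P w)"
proof -
  have "{y \<in> {1..length w}. P (w ! (y - 1))} = Suc ` {i. i < length w \<and> P (w ! i)}"
  proof (rule set_eqI)
    fix y show "y \<in> {y \<in> {1..length w}. P (w ! (y - 1))} \<longleftrightarrow> y \<in> Suc ` {i. i < length w \<and> P (w ! i)}"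
    proof
      assume y: "y \<in> {y \<in> {1..length w}. P (w ! (y - 1))}"
      then have "y - 1 \<in> {i. i < length w \<and> P (w ! i)}" "y = Suc (y - 1)" by auto
      then show "y \<in> Suc ` {i. i < length w \<and> P (w ! i)}" by blast
    qed auto
  qed
  then show ?thesis by (simp add: card_image length_filter_conv_card)
qed

lemma rk_filter:
  assumes x: "x \<in> {1..length w}" "P (w ! (x - 1))"
  shows "rk {y \<in> {1..length w}. P (w ! (y - 1))} x = Suc (length (filter P (take (x - 1) w)))"
proof -
  let ?I = "{y \<in> {1..length w}. P (w ! (y - 1))}"
  let ?K = "{i. i < x - 1 \<and> P (w ! i)}"
  have "length (filter P (take (x - 1) w)) = card {i. i < length (take (x-1) w) \<and> P (take (x-1) w ! i)}"
    by (rule length_filter_conv_card)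
  also have "{i. i < length (take (x-1) w) \<and> P (take (x-1) w ! i)} = ?K" using x by auto
  finally have len: "length (filter P (take (x - 1) w)) = card ?K" .
  have "{y \<in> ?I. y \<le> x} = insert x (Suc ` ?K)"
  proof (rule set_eqI)
    fix y show "y \<in> {y \<in> ?I. y \<le> x} \<longleftrightarrow> y \<in> insert x (Suc ` ?K)"
    proof
      assume "y \<in> {y \<in> ?I. y \<le> x}"
      then have y: "1 \<le> y" "y \<le> x" "P (w ! (y - 1))" by auto
      show "y \<in> insert x (Suc ` ?K)"
      proof (cases "y = x")
        case False
        then have yK: "y - 1 \<in> ?K" using y by auto
        have "Suc (y - 1) \<in> Suc ` ?K" using yK by (rule imageI)
        moreover have "Suc (y - 1) = y" using y by simp
        ultimately show ?thesis by simp
      qed simp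
    next
      assume "y \<in> insert x (Suc ` ?K)"
      then show "y \<in> {y \<in> ?I. y \<le> x}" using x by auto
    qed
  qed
  moreover have "x \<notin> Suc ` ?K" by auto
  ultimately show ?thesis unfolding rk_def using len by (simp add: card_image)
qed

lemma shuf_iff:
  "w \<in> shuffles (map Inl u) (map Inr v) \<longleftrightarrow>
     filter isl w = map Inl u \<and> filter (\<lambda>x. \<not> isl x) w = map Inr v"
proof
  assume w: "w \<in> shuffles (map Inl u) (map Inr v)"
  have "filter isl w \<in> filter isl ` shuffles (map Inl u) (map Inr v)" using w by blast
  also have "\<dots> = shuffles (filter isl (map Inl u)) (filter isl (map Inr v))" by (rule filter_shuffles)
  finally have 1: "filter isl w = map Inl u" by (simp add: filter_map o_def)
  have "filter (\<lambda>x. \<not> isl x) w \<in> filter (\<lambda>x. \<not> isl x) ` shuffles (map Inl u) (map Inr v)" using w by blast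
  also have "\<dots> = shuffles (filter (\<lambda>x. \<not> isl x) (map Inl u)) (filter (\<lambda>x. \<not> isl x) (map Inr v))"
    by (rule filter_shuffles)
  finally have 2: "filter (\<lambda>x. \<not> isl x) w = map Inr v" by (simp add: filter_map o_def)
  show "filter isl w = map Inl u \<and> filter (\<lambda>x. \<not> isl x) w = map Inr v" using 1 2 by simp
next
  assume A: "filter isl w = map Inl u \<and> filter (\<lambda>x. \<not> isl x) w = map Inr v"
  have a: "filter isl w = map Inl u" using A by blast
  have b: "filter (\<lambda>x. \<not> isl x) w = map Inr v" using A by blast
  have "w \<in> shuffles (filter isl w) (filter (\<lambda>x. \<not> isl x) w)" by (rule partition_in_shuffles)
  then show "w \<in> shuffles (map Inl u) (map Inr v)" unfolding a b .
qed

lemma merge_exists: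
  "length u = card {i. i < n \<and> i \<notin> M} \<Longrightarrow> length v = card {i. i < n \<and> i \<in> M} \<Longrightarrow>
   \<exists>w. length w = n \<and> (\<forall>i<n. isl (w ! i) \<longleftrightarrow> i \<notin> M) \<and>
        filter isl w = map Inl u \<and> filter (\<lambda>x. \<not> isl x) w = map Inr v"
proof (induction n arbitrary: u v)
  case 0
  then have "u = []" "v = []" by auto
  then show ?case by (intro exI[of _ "[]"]) simp
next
  case (Suc n)
  show ?case
  proof (cases "n \<in> M")
    case True
    have e1: "{i. i < Suc n \<and> i \<notin> M} = {i. i < n \<and> i \<notin> M}" using True by (auto simp: less_Suc_eq)
    have e2: "{i. i < Suc n \<and> i \<in> M} = insert n {i. i < n \<and> i \<in> M}" using True by (auto simp: less_Suc_eq)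
    have lv: "length v = Suc (card {i. i < n \<and> i \<in> M})" using Suc.prems(2) e2 by simp
    then have vne: "v \<noteq> []" by auto
    have lb: "length (butlast v) = card {i. i < n \<and> i \<in> M}" using lv by simp
    obtain w where w: "length w = n" "\<forall>i<n. isl (w ! i) \<longleftrightarrow> i \<notin> M" "filter isl w = map Inl u"
        "filter (\<lambda>x. \<not> isl x) w = map Inr (butlast v)"
    proof -
      have lu: "length u = card {i. i < n \<and> i \<notin> M}" using Suc.prems(1) e1 by simp
      show ?thesis using Suc.IH[OF lu lb] that by blast
    qed
    let ?w = "w @ [Inr (last v)]"
    have "\<forall>i<Suc n. isl (?w ! i) \<longleftrightarrow> i \<notin> M" using w True by (auto simp: nth_append less_Suc_eq)
    moreover have "filter (\<lambda>x. \<not> isl x) ?w = map Inr (butlast v) @ [Inr (last v)]" using w by simp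
    moreover have "map Inr (butlast v) @ [Inr (last v)] = map Inr (butlast v @ [last v])" by simp
    moreover have "butlast v @ [last v] = v" using vne by simp
    ultimately show ?thesis using w by (intro exI[of _ ?w]) simp
  next
    case False
    have e1: "{i. i < Suc n \<and> i \<in> M} = {i. i < n \<and> i \<in> M}" using False by (auto simp: less_Suc_eq)
    have e2: "{i. i < Suc n \<and> i \<notin> M} = insert n {i. i < n \<and> i \<notin> M}" using False by (auto simp: less_Suc_eq)
    have lu: "length u = Suc (card {i. i < n \<and> i \<notin> M})" using Suc.prems(1) e2 by simp
    then have une: "u \<noteq> []" by auto
    have lb: "length (butlast u) = card {i. i < n \<and> i \<notin> M}" using lu by simp
    obtain w where w: "length w = n" "\<forall>i<n. isl (w ! i) \<longleftrightarrow> i \<notin> M" "filter isl w = map Inl (butlast u)"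
        "filter (\<lambda>x. \<not> isl x) w = map Inr v"
    proof -
      have lv: "length v = card {i. i < n \<and> i \<in> M}" using Suc.prems(2) e1 by simp
      show ?thesis using Suc.IH[OF lb lv] that by blast
    qed
    let ?w = "w @ [Inl (last u)]"
    have "\<forall>i<Suc n. isl (?w ! i) \<longleftrightarrow> i \<notin> M" using w False by (auto simp: nth_append less_Suc_eq)
    moreover have "filter isl ?w = map Inl (butlast u) @ [Inl (last u)]" using w by simp
    moreover have "map Inl (butlast u) @ [Inl (last u)] = map Inl (butlast u @ [last u])" by simp
    moreover have "butlast u @ [last u] = u" using une by simp
    ultimately show ?thesis using w by (intro exI[of _ ?w]) simp
  qed
qed

lemma word_unique:
  "length w1 = length w2 \<Longrightarrow> (\<forall>i<length w1. isl (w1 ! i) = isl (w2 ! i)) \<Longrightarrow>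
   filter isl w1 = filter isl w2 \<Longrightarrow> filter (\<lambda>x. \<not> isl x) w1 = filter (\<lambda>x. \<not> isl x) w2 \<Longrightarrow> w1 = w2"
proof (induction w1 arbitrary: w2)
  case Nil then show ?case by simp
next
  case (Cons a w1)
  then obtain b w2' where w2: "w2 = b # w2'" by (cases w2) auto
  have ab: "isl a = isl b" using Cons.prems(2) w2 by force
  have rest: "\<forall>i<length w1. isl (w1 ! i) = isl (w2' ! i)"
  proof (intro allI impI)
    fix i assume "i < length w1"
    then have "Suc i < length (a # w1)" by simp
    from Cons.prems(2)[rule_format, OF this] show "isl (w1 ! i) = isl (w2' ! i)" using w2 by simp
  qed
  have l: "length w1 = length w2'" using Cons.prems(1) w2 by simp
  show ?case
  proof (cases "isl a")
    case True
    then have "a = b" "filter isl w1 = filter isl w2'" "filter (\<lambda>x. \<not> isl x) w1 = filter (\<lambda>x. \<not> isl x) w2'"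
      using Cons.prems(3,4) w2 ab by auto
    then show ?thesis using Cons.IH[OF l rest] w2 by simp
  next
    case False
    then have "a = b" "filter isl w1 = filter isl w2'" "filter (\<lambda>x. \<not> isl x) w1 = filter (\<lambda>x. \<not> isl x) w2'"
      using Cons.prems(3,4) w2 ab by auto
    then show ?thesis using Cons.IH[OF l rest] w2 by simp
  qed
qed

section \<open>Part (iii)\<close>

definition Bpos :: "oforest \<Rightarrow> ('a + 'b) list \<Rightarrow> nat set" where
  "Bpos F w = {x \<in> {1..fst F}. \<not> isl (w ! (x - 1))}"

lemma corr:
  assumes F: "F \<in> oforests" and lw: "length w = fst F"
    and L: "L = Bpos F w"
    and Lcl: "\<And>l k. snd F l = Some k \<Longrightarrow> k \<in> L \<Longrightarrow> l \<in> L"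
    and fu: "filter isl w = map Inl u" and fv: "filter (\<lambda>x. \<not> isl x) w = map Inr v"
  shows "(SF alphAB precAB F w :: 'k::field_char_0)
     = SF alphA precA (of_restrict F ({1..fst F} - L)) u * SF alphA precA (of_restrict F L) v"
proof -
  let ?n = "fst F"
  define Lc where "Lc = {1..?n} - L"
  have Lc_eq: "Lc = {y \<in> {1..length w}. isl (w ! (y - 1))}" using lw by (auto simp: Lc_def L Bpos_def)
  have L_eq: "L = {y \<in> {1..length w}. (\<lambda>x. \<not> isl x) (w ! (y - 1))}" using lw by (auto simp: L Bpos_def)
  have finL: "finite L" using L_eq by simp
  have finLc: "finite Lc" using Lc_eq by simp
  have lenu: "length u = card Lc"
    using card_pos_set[where P=isl and w=w] Lc_eq fu by (metis length_map)
  have lenv: "length v = card L"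
    using card_pos_set[where P="\<lambda>x. \<not> isl x" and w=w] L_eq fv by (metis length_map)
  have nthLc: "w ! (x - 1) = Inl (u ! (rk Lc x - 1))" if x: "x \<in> Lc" for x
  proof -
    have x1: "x \<in> {1..length w}" "isl (w ! (x - 1))" using x Lc_eq by auto
    have r: "rk Lc x = Suc (length (filter isl (take (x - 1) w)))"
      unfolding Lc_eq by (rule rk_filter[where P=isl and w=w, OF x1])
    have "x - 1 < length w" using x1 by auto
    from filter_nth_take[where P=isl and w=w, OF this x1(2)] fu
    have "length (filter isl (take (x - 1) w)) < length u"
      "map Inl u ! length (filter isl (take (x - 1) w)) = w ! (x - 1)" by auto
    then show ?thesis using r by simp
  qed
  have nthL: "w ! (x - 1) = Inr (v ! (rk L x - 1))" if x: "x \<in> L" for x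
  proof -
    have x1: "x \<in> {1..length w}" "(\<lambda>x. \<not> isl x) (w ! (x - 1))" using x L_eq by auto
    have r: "rk L x = Suc (length (filter (\<lambda>x. \<not> isl x) (take (x - 1) w)))"
      unfolding L_eq by (rule rk_filter[where P="\<lambda>x. \<not> isl x" and w=w, OF x1])
    have "x - 1 < length w" using x1 by auto
    from filter_nth_take[where P="\<lambda>x. \<not> isl x" and w=w, OF this x1(2)] fv
    have "length (filter (\<lambda>x. \<not> isl x) (take (x - 1) w)) < length v"
      "map Inr v ! length (filter (\<lambda>x. \<not> isl x) (take (x - 1) w)) = w ! (x - 1)" by auto
    then show ?thesis using r by simp
  qed
  have su: "Inl ` set u = {x \<in> set w. isl x}"
    using arg_cong[OF fu, of set] by simp
  have sv: "Inr ` set v = {x \<in> set w. \<not> isl x}"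
    using arg_cong[OF fv, of set] by simp
  have lists: "w \<in> lists alphAB \<longleftrightarrow> u \<in> lists alphA \<and> v \<in> lists alphA"
  proof
    assume A: "w \<in> lists alphAB"
    have "a \<in> alphA" if "a \<in> set u" for a
    proof -
      have "Inl a \<in> set w" using su that by blast
      then have "Inl a \<in> alphAB" using A by auto
      then show ?thesis by (auto simp: alphAB_def)
    qed
    moreover have "b \<in> alphA" if "b \<in> set v" for b
    proof -
      have "Inr b \<in> set w" using sv that by blast
      then have "Inr b \<in> alphAB" using A by auto
      then show ?thesis by (auto simp: alphAB_def)
    qed
    ultimately show "u \<in> lists alphA \<and> v \<in> lists alphA" by auto
  next
    assume A: "u \<in> lists alphA \<and> v \<in> lists alphA"
    have "x \<in> alphAB" if x: "x \<in> set w" for x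
    proof (cases x)
      case (Inl a)
      then have "x \<in> Inl ` set u" using su x by auto
      then show ?thesis using A Inl by (auto simp: alphAB_def)
    next
      case (Inr b)
      then have "x \<in> Inr ` set v" using sv x by auto
      then show ?thesis using A Inr by (auto simp: alphAB_def)
    qed
    then show "w \<in> lists alphAB" by auto
  qed
  have RC: "compatible precA (of_restrict F Lc) u \<longleftrightarrow>
      (\<forall>l\<in>Lc. \<forall>k\<in>Lc. snd F l = Some k \<longrightarrow> precAB (w ! (k - 1)) (w ! (l - 1)))"
    using restrict_compat[OF finLc, of precA F u] lenu nthLc by simp
  have LC: "compatible precA (of_restrict F L) v \<longleftrightarrow>
      (\<forall>l\<in>L. \<forall>k\<in>L. snd F l = Some k \<longrightarrow> precAB (w ! (k - 1)) (w ! (l - 1)))"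
    using restrict_compat[OF finL, of precA F v] lenv nthL by simp
  have WC: "compatible precAB F w \<longleftrightarrow>
      (\<forall>l k. snd F l = Some k \<longrightarrow> precAB (w ! (k - 1)) (w ! (l - 1)))"
    using lw unfolding compatible_def by blast
  have comp: "compatible precAB F w \<longleftrightarrow>
     compatible precA (of_restrict F Lc) u \<and> compatible precA (of_restrict F L) v"
  proof
    assume "compatible precAB F w"
    then show "compatible precA (of_restrict F Lc) u \<and> compatible precA (of_restrict F L) v"
      unfolding WC RC LC by blast
  next
    assume A: "compatible precA (of_restrict F Lc) u \<and> compatible precA (of_restrict F L) v"
    show "compatible precAB F w"
      unfolding WC
    proof (intro allI impI)
      fix l k assume e: "snd F l = Some k"
      have kl: "k \<in> {1..?n}" "l \<in> {1..?n}" using oforests_edge[OF F e] by auto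
      show "precAB (w ! (k - 1)) (w ! (l - 1))"
      proof (cases "k \<in> L")
        case True
        then have "l \<in> L" using Lcl e by blast
        then show ?thesis using A True e unfolding LC by blast
      next
        case False
        then have kLc: "k \<in> Lc" using kl by (simp add: Lc_def)
        show ?thesis
        proof (cases "l \<in> L")
          case True
          then show ?thesis using nthL[OF True] nthLc[OF kLc] by simp
        next
          case False
          then have "l \<in> Lc" using kl by (simp add: Lc_def)
          then show ?thesis using A kLc e unfolding RC by blast
        qed
      qed
    qed
  qed
  show ?thesis
    unfolding SF_def Lc_def[symmetric] using lists comp by auto
qed

lemma perV:
  assumes F: "F \<in> oforests" and V: "admissible_cut F V"
  shows "(\<Sum>w\<in>shuffles (map Inl u) (map Inr v).
            if Bpos F w = cut_L F V then (SF alphAB precAB F w :: 'k::field_char_0) else 0)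
       = SF alphA precA (Roo F V) u * SF alphA precA (Lea F V) v"
proof -
  let ?S = "shuffles (map Inl u) (map Inr v)"
  let ?L = "cut_L F V"
  let ?n = "fst F"
  have Lsub: "?L \<subseteq> {1..?n}" by (auto simp: cut_L_def)
  have cl: "\<And>l k. snd F l = Some k \<Longrightarrow> k \<in> ?L \<Longrightarrow> l \<in> ?L" using cut_L_closed[OF F] by blast
  have RooE: "Roo F V = of_restrict F ({1..?n} - ?L)" by (simp add: Roo_def)
  have LeaE: "Lea F V = of_restrict F ?L" by (simp add: Lea_def)
  show ?thesis
  proof (cases "\<exists>w0\<in>?S. Bpos F w0 = ?L \<and> length w0 = ?n")
    case True
    then obtain w0 where w0: "w0 \<in> ?S" "Bpos F w0 = ?L" "length w0 = ?n" by blast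
    have f0: "filter isl w0 = map Inl u" "filter (\<lambda>x. \<not> isl x) w0 = map Inr v"
      using w0(1) shuf_iff by blast+
    have uniq: "w = w0" if w: "w \<in> ?S" "Bpos F w = ?L" for w
    proof -
      have lw: "length w = ?n" using length_shuffles[OF w(1)] length_shuffles[OF w0(1)] w0(3) by simp
      have f: "filter isl w = map Inl u" "filter (\<lambda>x. \<not> isl x) w = map Inr v"
        using w(1) shuf_iff by blast+
      show "w = w0"
      proof (rule word_unique)
        show "length w = length w0" using lw w0 by simp
        show "\<forall>i<length w. isl (w ! i) = isl (w0 ! i)"
        proof (intro allI impI)
          fix i assume i: "i < length w"
          have "Suc i \<in> Bpos F w \<longleftrightarrow> Suc i \<in> Bpos F w0" using w(2) w0(2) by simp
          then show "isl (w ! i) = isl (w0 ! i)" using i lw by (simp add: Bpos_def)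
        qed
        show "filter isl w = filter isl w0" using f f0 by simp
        show "filter (\<lambda>x. \<not> isl x) w = filter (\<lambda>x. \<not> isl x) w0" using f f0 by simp
      qed
    qed
    have "(\<Sum>w\<in>?S. if Bpos F w = ?L then (SF alphAB precAB F w :: 'k) else 0)
        = (\<Sum>w\<in>?S. if w = w0 then (SF alphAB precAB F w :: 'k) else 0)"
    proof (rule sum.cong[OF refl])
      fix w assume w: "w \<in> ?S"
      show "(if Bpos F w = ?L then (SF alphAB precAB F w :: 'k) else 0)
          = (if w = w0 then (SF alphAB precAB F w :: 'k) else 0)"
      proof (cases "w = w0")
        case True then show ?thesis using w0(2) by simp
      next
        case False then have "Bpos F w \<noteq> ?L" using uniq w by blast
        then show ?thesis using False by simp
      qed
    qed
    also have "\<dots> = SF alphAB precAB F w0" using w0(1) by simp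
    also have "\<dots> = SF alphA precA (Roo F V) u * SF alphA precA (Lea F V) v"
      unfolding RooE LeaE by (rule corr[OF F w0(3) w0(2)[symmetric] cl f0])
    finally show ?thesis .
  next
    case False
    have "(\<Sum>w\<in>?S. if Bpos F w = ?L then (SF alphAB precAB F w :: 'k) else 0) = 0"
    proof (rule sum.neutral, rule ballI)
      fix w assume w: "w \<in> ?S"
      show "(if Bpos F w = ?L then (SF alphAB precAB F w :: 'k) else 0) = 0"
        using False w by (auto simp: SF_def compatible_def)
    qed
    moreover have "SF alphA precA (Roo F V) u * SF alphA precA (Lea F V) v = (0::'k)"
    proof (rule ccontr)
      assume "SF alphA precA (Roo F V) u * SF alphA precA (Lea F V) v \<noteq> (0::'k)"
      then have c1: "compatible precA (of_restrict F ({1..?n} - ?L)) u"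
        and c2: "compatible precA (of_restrict F ?L) v"
        unfolding RooE LeaE by (auto simp: SF_def split: if_splits)
      have lu: "length u = card ({1..?n} - ?L)" using c1 by (simp add: compatible_def of_restrict_def)
      have lv: "length v = card ?L" using c2 by (simp add: compatible_def of_restrict_def)
      define M where "M = {i. Suc i \<in> ?L}"
      have e1: "?L = Suc ` {i. i < ?n \<and> i \<in> M}"
      proof (rule set_eqI)
        fix y show "y \<in> ?L \<longleftrightarrow> y \<in> Suc ` {i. i < ?n \<and> i \<in> M}"
        proof
          assume y: "y \<in> ?L"
          have yr: "y \<in> {1..?n}" using y Lsub by blast
          then have "y - 1 \<in> {i. i < ?n \<and> i \<in> M}" "Suc (y - 1) = y" using y by (auto simp: M_def)
          then show "y \<in> Suc ` {i. i < ?n \<and> i \<in> M}" by (metis imageI)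
        qed (auto simp: M_def)
      qed
      have e2: "{1..?n} - ?L = Suc ` {i. i < ?n \<and> i \<notin> M}"
      proof (rule set_eqI)
        fix y show "y \<in> {1..?n} - ?L \<longleftrightarrow> y \<in> Suc ` {i. i < ?n \<and> i \<notin> M}"
        proof
          assume y: "y \<in> {1..?n} - ?L"
          then have "y - 1 \<in> {i. i < ?n \<and> i \<notin> M}" "Suc (y - 1) = y" by (auto simp: M_def)
          then show "y \<in> Suc ` {i. i < ?n \<and> i \<notin> M}" by (metis imageI)
        qed (auto simp: M_def)
      qed
      have "card ?L = card {i. i < ?n \<and> i \<in> M}" unfolding e1 by (simp add: card_image)
      moreover have "card ({1..?n} - ?L) = card {i. i < ?n \<and> i \<notin> M}" unfolding e2 by (simp add: card_image)
      ultimately obtain w where w: "length w = ?n" "\<forall>i<?n. isl (w ! i) \<longleftrightarrow> i \<notin> M"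
          "filter isl w = map Inl u" "filter (\<lambda>x. \<not> isl x) w = map Inr v"
        using merge_exists[of u ?n M v] lu lv by auto
      have "w \<in> ?S" using w shuf_iff by blast
      moreover have "Bpos F w = ?L"
      proof (rule set_eqI)
        fix x show "x \<in> Bpos F w \<longleftrightarrow> x \<in> ?L"
        proof
          assume x: "x \<in> Bpos F w"
          then have "x - 1 < ?n" "\<not> isl (w ! (x - 1))" "Suc (x - 1) = x" by (auto simp: Bpos_def)
          then have "x - 1 \<in> M" using w(2) by blast
          then show "x \<in> ?L" using \<open>Suc (x - 1) = x\<close> by (simp add: M_def)
        next
          assume x: "x \<in> ?L"
          then have xr: "x \<in> {1..?n}" using Lsub by blast
          then have "x - 1 < ?n" "Suc (x - 1) = x" by auto
          moreover have "x - 1 \<in> M" using x xr by (simp add: M_def)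
          ultimately have "\<not> isl (w ! (x - 1))" using w(2) by blast
          then show "x \<in> Bpos F w" using xr by (simp add: Bpos_def)
        qed
      qed
      ultimately show False using False w(1) by blast
    qed
    ultimately show ?thesis by simp
  qed
qed

lemma adm_finite: "finite {V. admissible_cut F V}"
  by (rule finite_subset[of _ "Pow {1..fst F}"]) (auto simp: admissible_cut_def)

lemma perW:
  assumes F: "F \<in> oforests"
  shows "(\<Sum>V\<in>{V. admissible_cut F V}. if Bpos F w = cut_L F V then (SF alphAB precAB F w :: 'k::field_char_0) else 0)
       = SF alphAB precAB F w"
proof (cases "w \<in> lists alphAB \<and> compatible precAB F w")
  case False
  then have z: "(SF alphAB precAB F w :: 'k) = 0" by (simp add: SF_def)
  show ?thesis unfolding z by simp
next
  case True
  have cl: "l \<in> Bpos F w" if e: "snd F l = Some k" and k: "k \<in> Bpos F w" for l k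
  proof -
    have l: "l \<in> {1..fst F}" using oforests_edge[OF F e] by auto
    have p: "precAB (w ! (k - 1)) (w ! (l - 1))" using True e by (simp add: compatible_def)
    have nk: "\<not> isl (w ! (k - 1))" using k by (simp add: Bpos_def)
    have "\<not> isl (w ! (l - 1))"
      using p nk by (cases "w ! (k - 1)"; cases "w ! (l - 1)") auto
    then show ?thesis using l by (simp add: Bpos_def)
  qed
  obtain V0 where V0: "admissible_cut F V0" "cut_L F V0 = Bpos F w"
  proof -
    have sub: "Bpos F w \<subseteq> {1..fst F}" by (auto simp: Bpos_def)
    have "\<exists>V. admissible_cut F V \<and> cut_L F V = Bpos F w"
      by (rule cut_exists[OF F sub]) (use cl in blast)
    then show ?thesis using that by blast
  qed
  have "(\<Sum>V\<in>{V. admissible_cut F V}. if Bpos F w = cut_L F V then (SF alphAB precAB F w :: 'k) else 0)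
      = (\<Sum>V\<in>{V. admissible_cut F V}. if V = V0 then (SF alphAB precAB F w :: 'k) else 0)"
  proof (rule sum.cong)
    fix V assume "V \<in> {V. admissible_cut F V}"
    then have "Bpos F w = cut_L F V \<longleftrightarrow> V = V0" using cut_unique[OF F _ V0(1)] V0(2) by auto
    then show "(if Bpos F w = cut_L F V then (SF alphAB precAB F w :: 'k) else 0)
      = (if V = V0 then SF alphAB precAB F w else 0)" by simp
  qed simp
  also have "\<dots> = SF alphAB precAB F w" using V0(1) adm_finite[of F] by simp
  finally show ?thesis .
qed

lemma part3:
  assumes F: "F \<in> oforests"
  shows "(\<Sum>w\<in>shuffles (map Inl u) (map Inr v). (SF alphAB precAB F w :: 'k::field_char_0))
        = (\<Sum>V\<in>{V. admissible_cut F V}.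
             SF alphA precA (Roo F V) u * SF alphA precA (Lea F V) v)"
proof -
  let ?S = "shuffles (map Inl u) (map Inr v)"
  have "(\<Sum>w\<in>?S. (SF alphAB precAB F w :: 'k))
      = (\<Sum>w\<in>?S. \<Sum>V\<in>{V. admissible_cut F V}. if Bpos F w = cut_L F V then (SF alphAB precAB F w :: 'k) else 0)"
    by (rule sum.cong[OF refl]) (rule perW[OF F, symmetric])
  also have "\<dots> = (\<Sum>V\<in>{V. admissible_cut F V}. \<Sum>w\<in>?S. if Bpos F w = cut_L F V then (SF alphAB precAB F w :: 'k) else 0)"
    by (rule sum.swap)
  also have "\<dots> = (\<Sum>V\<in>{V. admissible_cut F V}. SF alphA precA (Roo F V) u * SF alphA precA (Lea F V) v)"
    by (rule sum.cong[OF refl]) (simp add: perV[OF F])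
  finally show ?thesis .
qed

theorem theorem3p2:
  shows
    "(\<forall>X (c :: oforest \<Rightarrow> 'k::field_char_0).
        finite X \<and> X \<subseteq> oforests \<and>
        (\<forall>w. (\<Sum>F\<in>X. c F * SF alphA precA F w) = 0)
        \<longrightarrow> (\<forall>F\<in>X. c F = 0))
   \<and> (\<forall>F\<in>oforests. \<forall>G\<in>oforests.
        ser_mult (SF alphA precA F) (SF alphA precA G)
          = (SF alphA precA (of_prod F G) :: (int \<times> int) list \<Rightarrow> 'k))
   \<and> (\<forall>F\<in>oforests. \<forall>u v.
        (\<Sum>w\<in>shuffles (map Inl u) (map Inr v). (SF alphAB precAB F w :: 'k))
        = (\<Sum>V\<in>{V. admissible_cut F V}.
             SF alphA precA (Roo F V) u * SF alphA precA (Lea F V) v))"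
proof (intro conjI)
  show "\<forall>X (c :: oforest \<Rightarrow> 'k::field_char_0).
        finite X \<and> X \<subseteq> oforests \<and>
        (\<forall>w. (\<Sum>F\<in>X. c F * SF alphA precA F w) = 0)
        \<longrightarrow> (\<forall>F\<in>X. c F = 0)"
    using part1 by blast
  show "\<forall>F\<in>oforests. \<forall>G\<in>oforests.
        ser_mult (SF alphA precA F) (SF alphA precA G)
          = (SF alphA precA (of_prod F G) :: (int \<times> int) list \<Rightarrow> 'k)"
    by (intro ballI ext part2)
  show "\<forall>F\<in>oforests. \<forall>u v.
        (\<Sum>w\<in>shuffles (map Inl u) (map Inr v). (SF alphAB precAB F w :: 'k))
        = (\<Sum>V\<in>{V. admissible_cut F V}.
             SF alphA precA (Roo F V) u * SF alphA precA (Lea F V) v)"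
    using part3 by blast
qed

end
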